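(* Let $\mathcal{G}=\{V,E,\boldsymbol{W}\}$ be an undirected graph with $p$ vertices $V=\{1,\dots,p\}$ and symmetric nonnegative weighted adjacency matrix $\boldsymbol{W}$. Let $\boldsymbol{L}$ be its normalized graph Laplacian, with orthonormal eigenvectors $\boldsymbol{u}_1,\dots,\boldsymbol{u}_p$ and associated eigenvalues $\mu_1,\dots,\mu_p$, and let $\rho(\boldsymbol{L})$ denote its spectral radius. Consider the graph signal sequence $\boldsymbol{y}_t=\boldsymbol{m}+\boldsymbol{e}_t$, $t=0,1,2,\dots$. Here $\boldsymbol{m}\in\mathbb{R}^p$ is fixed, and the $\boldsymbol{e}_t$ are temporally i.i.d. with $\boldsymbol{e}_t\sim\mathcal{N}(\boldsymbol{0},\sigma^2\boldsymbol{I})$. Fix an integer $K\ge1$ and scalar parameters $c$ and $(\psi_\ell,\varphi_\ell)$, $\ell=1,\dots,K$; a superscript $^\ast$ denotes complex conjugation. Define the parallel ARMA$_K$ graph filter output $\boldsymbol{z}_t$ by $$\boldsymbol{x}_{\ell,t}=\psi_\ell\boldsymbol{L}\boldsymbol{x}_{\ell,t-1}+\varphi_\ell\boldsymbol{y}_t,\quad \boldsymbol{x}_{\ell,-1}=\boldsymbol{0},\quad \ell=1,\dots,K,$$ $$\boldsymbol{z}_t=\sum_{\ell=1}^K\boldsymbol{x}_{\ell,t}+c\,\boldsymbol{y}_t.$$ Suppose $\max_\ell\{|\psi_\ell|\}\,\rho(\boldsymbol{L})<1$. Then, as $t\to\infty$, $\boldsymbol{z}_t$ is asymptotically distributed as $\mathcal{N}(\bar{\boldsymbol{z}}_\infty,\boldsymbol{Q}_\infty)$,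 where the two parameters are as follows. - $\bar{\boldsymbol{z}}_\infty=\sum_{i=1}^p h(\mu_i)(\boldsymbol{u}_i^\top\boldsymbol{m})\boldsymbol{u}_i$ is the signal $\boldsymbol{m}$ graph-filtered by the frequency response $$h(\mu)=c+\sum_{\ell=1}^K\frac{\varphi_\ell}{1-\psi_\ell\mu}.$$ - The covariance is $$\boldsymbol{Q}_\infty=\sum_{i=1}^p\kappa(\mu_i)\boldsymbol{u}_i\boldsymbol{u}_i^\top,\qquad \kappa(\mu)=\sum_{\ell,\ell'=1}^K\frac{\sigma^2\varphi_\ell\varphi_{\ell'}^\ast}{1-\psi_\ell\psi_{\ell'}^\ast\mu^2}+\eta,$$ with $\eta=c\sigma^2\big(c+2\sum_{\ell=1}^K\varphi_\ell\big)$.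
   Context: The normalized graph Laplacian is the standard one, $\boldsymbol{I}-\boldsymbol{D}^{-1/2}\boldsymbol{W}\boldsymbol{D}^{-1/2}$, with $\boldsymbol{D}$ the diagonal degree matrix. "Asymptotically distributed as" means convergence in distribution as $t\to\infty$. *)

theory Defs
  imports "HOL-Probability.Probability"
begin

definition degree :: "real^'n^'n \<Rightarrow> 'n \<Rightarrow> real" where
  "degree W i = (\<Sum>j\<in>UNIV. W $ i $ j)"

definition deg_inv_sqrt :: "real^'n^'n \<Rightarrow> real^'n^'n" where
  "deg_inv_sqrt W = (\<chi> i j. if i = j then 1 / sqrt (degree W i) else 0)"

definition norm_laplacian :: "real^'n^'n \<Rightarrow> real^'n^'n" where
  "norm_laplacian W = mat 1 - deg_inv_sqrt W ** W ** deg_inv_sqrt W"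

definition cmat :: "real^'n^'m \<Rightarrow> complex^'n^'m" where
  "cmat A = (\<chi> i j. complex_of_real (A $ i $ j))"

definition cvec :: "real^'n \<Rightarrow> complex^'n" where
  "cvec v = (\<chi> i. complex_of_real (v $ i))"

definition re_vec :: "complex^'n \<Rightarrow> real^'n" where
  "re_vec v = (\<chi> i. Re (v $ i))"

definition spectral_radius :: "real^'n^'n \<Rightarrow> real" where
  "spectral_radius A = Max {cmod ev | ev. \<exists>v::complex^'n. v \<noteq> 0 \<and> cmat A *v v = ev *s v}"

definition outer :: "real^'n \<Rightarrow> real^'n^'n" where
  "outer u = (\<chi> a b. u $ a * u $ b)"

fun arma_branch :: "complex \<Rightarrow> complex \<Rightarrow> complex^'n^'n \<Rightarrow> (nat \<Rightarrow> complex^'n) \<Rightarrow> nat \<Rightarrow> complex^'n" where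
  "arma_branch psi phi L y 0 = psi *s (L *v 0) + phi *s y 0"
| "arma_branch psi phi L y (Suc t) = psi *s (L *v arma_branch psi phi L y t) + phi *s y (Suc t)"

definition arma_output :: "nat \<Rightarrow> real \<Rightarrow> (nat \<Rightarrow> complex) \<Rightarrow> (nat \<Rightarrow> complex) \<Rightarrow> complex^'n^'n \<Rightarrow> (nat \<Rightarrow> complex^'n) \<Rightarrow> nat \<Rightarrow> complex^'n" where
  "arma_output K c psi phi L y t =
     (\<Sum>l\<in>{1..K}. arma_branch (psi l) (phi l) L y t) + complex_of_real c *s y t"

text \<open>Multivariate normal N(mu, Q) (possibly degenerate), via its characteristic function.\<close>
definition gaussian_vec :: "real^'n \<Rightarrow> real^'n^'n \<Rightarrow> (real^'n) measure \<Rightarrow> bool" where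
  "gaussian_vec mu Q N \<longleftrightarrow> prob_space N \<and> sets N = sets borel \<and>
     (\<forall>s. (\<integral>x. cis (s \<bullet> x) \<partial>N) = cis (s \<bullet> mu) * complex_of_real (exp (- (s \<bullet> (Q *v s)) / 2)))"

definition converges_in_distribution :: "(nat \<Rightarrow> 'b::topological_space measure) \<Rightarrow> 'b measure \<Rightarrow> bool" where
  "converges_in_distribution Ms N \<longleftrightarrow>
     (\<forall>f::'b \<Rightarrow> real. continuous_on UNIV f \<and> bounded (range f) \<longrightarrow>
        (\<lambda>t. \<integral>x. f x \<partial>Ms t) \<longlonglongrightarrow> (\<integral>x. f x \<partial>N))"

end

theory Submission
  imports Defs
begin

inductive trig :: "(real^'n \<Rightarrow> complex) \<Rightarrow> bool" where
  tcis: "trig (\<lambda>x. c * cis (s \<bullet> x))"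
| tadd: "trig f \<Longrightarrow> trig g \<Longrightarrow> trig (\<lambda>x. f x + g x)"

lemma trig_const: "trig (\<lambda>x. c)"
  using tcis[of c 0] by simp

lemma trig_scale: "trig f \<Longrightarrow> trig (\<lambda>x. a * f x)"
proof (induction rule: trig.induct)
  case (tcis c s)
  then show ?case using trig.tcis[of "a*c" s] by (simp add: mult.assoc)
next
  case (tadd f g)
  then show ?case using trig.tadd[of "\<lambda>x. a * f x" "\<lambda>x. a * g x"] by (simp add: distrib_left)
qed

lemma trig_mult_cis: "trig f \<Longrightarrow> trig (\<lambda>x. f x * (c * cis (s \<bullet> x)))"
proof (induction rule: trig.induct)
  case (tcis d t)
  have "(\<lambda>x. d * cis (t \<bullet> x) * (c * cis (s \<bullet> x))) = (\<lambda>x. (d*c) * cis ((t + s) \<bullet> x))"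
    by (auto simp: cis_mult inner_add_left mult_ac add.commute)
  then show ?case using trig.tcis by metis
next
  case (tadd f g)
  then show ?case using trig.tadd by (simp add: distrib_right)
qed

lemma trig_mult: assumes "trig f" "trig g" shows "trig (\<lambda>x. f x * g x)"
  using assms(2)
proof (induction g rule: trig.induct)
  case (tcis c s)
  then show ?case using assms(1) trig_mult_cis by blast
next
  case (tadd g1 g2)
  then show ?case using trig.tadd[of "\<lambda>x. f x * g1 x" "\<lambda>x. f x * g2 x"] by (simp add: distrib_left)
qed

lemma trig_sum: "finite I \<Longrightarrow> (\<And>i. i \<in> I \<Longrightarrow> trig (f i)) \<Longrightarrow> trig (\<lambda>x. \<Sum>i\<in>I. f i x)"
  by (induction I rule: finite_induct) (auto intro: trig_const trig.tadd)

lemma trig_cos: "trig (\<lambda>x. complex_of_real (cos (s \<bullet> x)))"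
proof -
  have "(\<lambda>x. complex_of_real (cos (s \<bullet> x))) = (\<lambda>x. (1/2) * cis (s \<bullet> x) + (1/2) * cis ((-s) \<bullet> x))"
    by (auto simp: cis.ctr complex_eq_iff)
  moreover have "trig (\<lambda>x. (1/2) * cis (s \<bullet> x) + (1/2) * cis ((-s) \<bullet> x))" by (intro tadd tcis)
  ultimately show ?thesis by simp
qed

lemma trig_sin: "trig (\<lambda>x. complex_of_real (sin (s \<bullet> x)))"
proof -
  have "(\<lambda>x. complex_of_real (sin (s \<bullet> x))) = (\<lambda>x. (-\<i>/2) * cis (s \<bullet> x) + (\<i>/2) * cis ((-s) \<bullet> x))"
    by (auto simp: cis.ctr complex_eq_iff)
  moreover have "trig (\<lambda>x. (-\<i>/2) * cis (s \<bullet> x) + (\<i>/2) * cis ((-s) \<bullet> x))" by (intro tadd tcis)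
  ultimately show ?thesis by simp
qed

lemma trig_bounded_meas:
  assumes "trig f"
  shows "f \<in> borel_measurable borel \<and> (\<exists>B. \<forall>x. norm (f x) \<le> B)"
  using assms
proof (induction rule: trig.induct)
  case (tcis c s)
  have "(\<lambda>x. c * cis (s \<bullet> x)) \<in> borel_measurable borel"
    by (intro borel_measurable_continuous_onI continuous_intros)
  moreover have "norm (c * cis (s \<bullet> x)) \<le> norm c" for x by (simp add: norm_mult)
  ultimately show ?case by blast
next
  case (tadd f g)
  then obtain B1 B2 where "\<forall>x. norm (f x) \<le> B1" "\<forall>x. norm (g x) \<le> B2" by blast
  then have "\<forall>x. norm (f x + g x) \<le> B1 + B2" by (meson add_mono norm_triangle_le)
  with tadd show ?case by auto
qed

lemma trig_integral_eq:
  fixes \<mu> \<nu> :: "(real^'n) measure"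
  assumes "prob_space \<mu>" "prob_space \<nu>" "sets \<mu> = sets borel" "sets \<nu> = sets borel"
    and ch: "\<And>s. (\<integral>x. cis (s \<bullet> x) \<partial>\<mu>) = (\<integral>x. cis (s \<bullet> x) \<partial>\<nu>)"
    and "trig f"
  shows "integrable \<mu> f \<and> integrable \<nu> f \<and> (\<integral>x. f x \<partial>\<mu>) = (\<integral>x. f x \<partial>\<nu>)"
proof -
  have intg: "integrable M g" if pM: "prob_space M" and sM: "sets M = sets borel" and tg: "trig g" for M :: "(real^'n) measure" and g
  proof -
    interpret prob_space M by (rule pM)
    obtain B where B: "\<forall>x. norm (g x) \<le> B" and m: "g \<in> borel_measurable borel"
      using trig_bounded_meas[OF tg] by blast
    have "g \<in> borel_measurable M" using m measurable_cong_sets[OF sM refl] by blast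
    then show ?thesis using B by (intro integrable_const_bound[where B=B]) auto
  qed
  show ?thesis using assms(6)
  proof (induction rule: trig.induct)
    case (tcis c s)
    show ?case using intg[OF assms(1,3) trig.tcis] intg[OF assms(2,4) trig.tcis] ch[of s] by simp
  next
    case (tadd f g)
    then show ?case by (simp add: Bochner_Integration.integral_add)
  qed
qed

definition tor :: "real \<Rightarrow> real^'n \<Rightarrow> (real^'n) \<times> (real^'n)" where
  "tor r x = ((\<chi> j. cos (pi * x$j / r)), (\<chi> j. sin (pi * x$j / r)))"

lemma inner_axis_scaled: "((pi / r) *\<^sub>R axis j 1) \<bullet> (x::real^'n) = pi * x$j / r"
  by (simp add: inner_axis' )

lemma bl_prod_expand:
  fixes p :: "(real^'n) \<times> (real^'n) \<Rightarrow> real"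
  assumes "bounded_linear p"
  shows "p (a, b) = (\<Sum>j\<in>UNIV. a$j * p (axis j 1, 0)) + (\<Sum>j\<in>UNIV. b$j * p (0, axis j 1))"
proof -
  interpret linear p using assms bounded_linear.linear by blast
  have 1: "p (a, b) = p (a, 0) + p (0, b)" by (metis add_Pair add.right_neutral add_0 add)
  have "p (a, 0) = p (\<Sum>j\<in>UNIV. a$j *\<^sub>R (axis j 1, 0))"
    using basis_expansion[of a] by (simp add: scalar_mult_eq_scaleR sum_prod)
  also have "\<dots> = (\<Sum>j\<in>UNIV. p (a$j *\<^sub>R (axis j 1, 0)))" by (rule sum)
  also have "\<dots> = (\<Sum>j\<in>UNIV. a$j * p (axis j 1, 0))" by (simp only: scale real_scaleR_def)
  finally have 2: "p (a, 0) = (\<Sum>j\<in>UNIV. a$j * p (axis j 1, 0))" .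
  have "p (0, b) = p (\<Sum>j\<in>UNIV. b$j *\<^sub>R (0, axis j 1))"
    using basis_expansion[of b] by (simp add: scalar_mult_eq_scaleR sum_prod)
  also have "\<dots> = (\<Sum>j\<in>UNIV. p (b$j *\<^sub>R (0, axis j 1)))" by (rule sum)
  also have "\<dots> = (\<Sum>j\<in>UNIV. b$j * p (0, axis j 1))" by (simp only: scale real_scaleR_def)
  finally have 3: "p (0, b) = (\<Sum>j\<in>UNIV. b$j * p (0, axis j 1))" .
  show ?thesis using 1 2 3 by simp
qed

lemma trig_poly:
  assumes "real_polynomial_function p"
  shows "trig (\<lambda>x. complex_of_real (p (tor r x)))"
  using assms
proof (induction rule: real_polynomial_function.induct)
  case (linear f)
  have e: "complex_of_real (f (tor r x)) =
     (\<Sum>j\<in>UNIV. complex_of_real (f (axis j 1, 0)) * complex_of_real (cos (((pi / r) *\<^sub>R axis j 1) \<bullet> x)))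
   + (\<Sum>j\<in>UNIV. complex_of_real (f (0, axis j 1)) * complex_of_real (sin (((pi / r) *\<^sub>R axis j 1) \<bullet> x)))" for x
  proof -
    have "f (tor r x) = (\<Sum>j\<in>UNIV. f (axis j 1, 0) * cos (pi * x$j / r)) + (\<Sum>j\<in>UNIV. f (0, axis j 1) * sin (pi * x$j / r))"
      using bl_prod_expand[OF linear, of "\<chi> j. cos (pi * x$j / r)" "\<chi> j. sin (pi * x$j / r)"]
      by (simp add: tor_def mult.commute)
    then show ?thesis unfolding inner_axis_scaled of_real_mult[symmetric] of_real_sum[symmetric] of_real_add[symmetric]
      by (simp only:)
  qed
  show ?case unfolding e
    apply (rule tadd)
     apply (rule trig_sum, simp)
     apply (rule trig_scale, rule trig_cos)
    apply (rule trig_sum, simp)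
    apply (rule trig_scale, rule trig_sin)
    done
next
  case (const c)
  then show ?case by (rule trig_const)
next
  case (add f g)
  then show ?case by (simp add: tadd)
next
  case (mult f g)
  then show ?case by (simp add: trig_mult)
qed

lemma cos_sin_shift:
  fixes k :: int
  shows "cos (a - 2 * pi * k) = cos a" "sin (a - 2 * pi * k) = sin a"
  by (simp_all add: cos_diff sin_diff)

lemma tor_periodic:
  assumes r: "r > 0"
  shows "\<exists>x'. (\<forall>j. \<bar>x'$j\<bar> \<le> r) \<and> tor r x' = tor r x"
proof -
  define k where "k j = \<lfloor>(x$j + r) / (2*r)\<rfloor>" for j
  define x' where "x' = (\<chi> j. x$j - 2 * r * k j)"
  have b: "\<bar>x'$j\<bar> \<le> r" for j
  proof -
    have "k j \<le> (x$j + r) / (2*r)" "(x$j + r) / (2*r) < k j + 1" unfolding k_def by linarith+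
    then have "2*r * k j \<le> x$j + r" "x$j + r < 2*r*(k j + 1)" using r by (auto simp: field_simps)
    then show ?thesis unfolding x'_def by (simp add: algebra_simps)
  qed
  have "pi * x'$j / r = pi * x$j / r - 2 * pi * k j" for j
    unfolding x'_def using r by (simp add: field_simps)
  then have "tor r x' = tor r x" unfolding tor_def by (simp add: cos_sin_shift)
  then show ?thesis using b by blast
qed

lemma coord_eq:
  assumes r: "r > 0" and a: "\<bar>a\<bar> \<le> r" and b: "\<bar>b\<bar> \<le> r"
    and c: "cos (pi * a / r) = cos (pi * b / r)" and s: "sin (pi * a / r) = sin (pi * b / r)"
  shows "a = b \<or> \<bar>a\<bar> = r"
proof -
  have "cos (pi * a / r - pi * b / r) = 1"
    unfolding cos_diff c s by (simp add: power2_eq_square[symmetric])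
  then obtain n :: int where n: "pi * a / r - pi * b / r = n * 2 * pi" by (auto simp: cos_one_2pi_int)
  then have "pi * (a - b) = pi * (2 * n * r)" using r by (simp add: field_simps)
  then have ab: "a - b = 2 * n * r" by simp
  have "\<bar>2 * n * r\<bar> \<le> 2 * r" using a b ab by linarith
  then have "\<bar>n\<bar> * r \<le> r" using r by (simp add: abs_mult)
  then have "\<bar>n\<bar> \<le> 1" using r by simp
  then have "n = 0 \<or> n = 1 \<or> n = -1" by linarith
  then show ?thesis using ab a b by auto
qed

lemma compact_K: "compact {x::real^'n. \<forall>j. \<bar>x$j\<bar> \<le> r}"
proof -
  have "{x::real^'n. \<forall>j. \<bar>x$j\<bar> \<le> r} = {-(\<chi> j. r) .. (\<chi> j. r)}"
  proof -
    have 1: "x \<in> {-(\<chi> j. r)..(\<chi> j. r)} \<longleftrightarrow> (\<forall>j. -r \<le> x$j \<and> x$j \<le> r)" for x :: "real^'n"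
      by (simp add: less_eq_vec_def) blast
    have 2: "\<bar>a\<bar> \<le> r \<longleftrightarrow> -r \<le> a \<and> a \<le> r" for a :: real by arith
    show ?thesis using 1 2 by blast
  qed
  then show ?thesis by (simp add: interval_cbox_cart compact_cbox)
qed

lemma torus_factor:
  fixes F :: "real^'n \<Rightarrow> real"
  assumes r: "r > 0" and Fc: "continuous_on UNIV F"
    and F0: "\<And>x j. \<bar>x$j\<bar> = r \<Longrightarrow> F x = 0"
  defines "K \<equiv> {x::real^'n. \<forall>j. \<bar>x$j\<bar> \<le> r}"
  shows "\<exists>g. continuous_on (tor r ` K) g \<and> (\<forall>x\<in>K. g (tor r x) = F x)"
proof -
  have wd: "F x = F y" if "x \<in> K" "y \<in> K" "tor r x = tor r y" for x y
  proof (cases "x = y")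
    case False
    then obtain j where j: "x$j \<noteq> y$j" by (auto simp: vec_eq_iff)
    have "cos (pi * x$j / r) = cos (pi * y$j / r)" "sin (pi * x$j / r) = sin (pi * y$j / r)"
      using that(3) unfolding tor_def by (auto simp: vec_eq_iff)
    then have "\<bar>x$j\<bar> = r" using coord_eq[OF r, of "x$j" "y$j"] that(1,2) j unfolding K_def by auto
    moreover have "\<bar>y$j\<bar> = r" using coord_eq[OF r, of "y$j" "x$j"] that(1,2) j unfolding K_def
      using \<open>cos (pi * x$j / r) = cos (pi * y$j / r)\<close> \<open>sin (pi * x$j / r) = sin (pi * y$j / r)\<close> by auto
    ultimately show ?thesis using F0 by metis
  qed simp
  define g where "g y = F (SOME x. x \<in> K \<and> tor r x = y)" for y
  have gF: "g (tor r x) = F x" if "x \<in> K" for x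
  proof -
    have "\<exists>x'. x' \<in> K \<and> tor r x' = tor r x" using that by blast
    then have "(SOME x'. x' \<in> K \<and> tor r x' = tor r x) \<in> K \<and> tor r (SOME x'. x' \<in> K \<and> tor r x' = tor r x) = tor r x"
      by (rule someI_ex)
    then show ?thesis unfolding g_def using wd that by blast
  qed
  have ct: "continuous_on UNIV (tor r)" unfolding tor_def
    using r by (intro continuous_intros continuous_on_vec_lambda) auto
  have cK: "compact K" unfolding K_def by (rule compact_K)
  have q: "quotient_map (top_of_set K) (top_of_set (tor r ` K)) (tor r)"
  proof (rule T1_Spaces.continuous_imp_quotient_map)
    show "continuous_map (top_of_set K) (top_of_set (tor r ` K)) (tor r)"
      using ct by (auto simp: continuous_map_in_subtopology intro: continuous_on_subset)
    show "compact_space (top_of_set K)" using cK by (simp add: compact_space_subtopology)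
    show "Hausdorff_space (top_of_set (tor r ` K))" by (simp add: Hausdorff_space_subtopology)
  qed simp
  have "continuous_map (top_of_set K) euclidean (g \<circ> tor r)"
  proof -
    have "continuous_on K (g \<circ> tor r)"
      using continuous_on_subset[OF Fc] by (rule continuous_on_eq) (auto simp: gF)
    then show ?thesis by simp
  qed
  then have "continuous_map (top_of_set (tor r ` K)) euclidean g"
    using continuous_compose_quotient_map[OF q] by blast
  then show ?thesis using gF by auto
qed

lemma tight:
  fixes M :: "(real^'n) measure"
  assumes pM: "prob_space M" and sM: "sets M = sets borel" and e: "e > 0"
  shows "\<exists>R0. \<forall>R\<ge>R0. measure M {x. R < norm x} < e"
proof -
  interpret prob_space M by (rule pM)
  define A where "A n = {x::real^'n. real n < norm x}" for n
  have rA: "range A \<subseteq> sets M" unfolding A_def sM by auto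
  have dA: "decseq A" unfolding A_def decseq_def by auto
  have "(\<Inter>i. A i) = {}"
  proof (rule ccontr)
    assume "(\<Inter>i. A i) \<noteq> {}"
    then obtain x where "\<forall>i. x \<in> A i" by blast
    moreover obtain n where "norm x \<le> real n" using real_arch_simple by blast
    ultimately show False unfolding A_def by (metis mem_Collect_eq not_less)
  qed
  then have "(\<lambda>n. measure M (A n)) \<longlonglongrightarrow> 0" using finite_Lim_measure_decseq[OF rA dA] by simp
  then obtain N where N: "\<forall>n\<ge>N. measure M (A n) < e"
    using e by (auto dest!: order_tendstoD(2) simp: eventually_sequentially)
  have "measure M {x. R < norm x} < e" if "R \<ge> real N" for R
  proof -
    have "{x. R < norm x} \<subseteq> A N" unfolding A_def using that by auto
    then have "measure M {x. R < norm x} \<le> measure M (A N)"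
      using rA by (intro finite_measure_mono) auto
    then show ?thesis using N by auto
  qed
  then show ?thesis by blast
qed

lemma int_diff_bound:
  fixes M :: "'a measure"
  assumes pM: "prob_space M" and i1: "integrable M h1" and i2: "integrable M h2"
    and A: "A \<in> sets M" and b: "b \<ge> 0"
    and bd: "\<And>x. \<bar>h1 x - h2 x\<bar> \<le> a + b * indicator A x"
  shows "\<bar>(\<integral>x. h1 x \<partial>M) - (\<integral>x. h2 x \<partial>M)\<bar> \<le> a + b * measure M A"
proof -
  interpret prob_space M by (rule pM)
  have ig: "integrable M (\<lambda>x. a + b * indicator A x)"
    using A by (intro Bochner_Integration.integrable_add integrable_mult_right integrable_real_indicator) (auto simp: less_top[symmetric])
  have "\<bar>(\<integral>x. h1 x \<partial>M) - (\<integral>x. h2 x \<partial>M)\<bar> = \<bar>\<integral>x. h1 x - h2 x \<partial>M\<bar>"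
    using i1 i2 by simp
  also have "\<dots> \<le> (\<integral>x. a + b * indicator A x \<partial>M)"
  proof -
    have d: "integrable M (\<lambda>x. h1 x - h2 x)" using i1 i2 by auto
    have "\<bar>\<integral>x. h1 x - h2 x \<partial>M\<bar> \<le> (\<integral>x. norm (h1 x - h2 x) \<partial>M)"
      using integral_norm_bound[of M "\<lambda>x. h1 x - h2 x"] by simp
    also have "\<dots> \<le> (\<integral>x. a + b * indicator A x \<partial>M)"
      using d ig bd by (intro integral_mono) auto
    finally show ?thesis .
  qed
  also have "\<dots> = a + b * measure M A"
  proof -
    have "integrable M (\<lambda>x. b * indicator A x)" using ig A
      by (intro integrable_mult_right integrable_real_indicator) (auto simp: less_top[symmetric])
    then show ?thesis using A
      by (subst Bochner_Integration.integral_add) (auto simp: prob_space)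
  qed
  finally show ?thesis .
qed

lemma meas_cont:
  assumes "sets M = sets borel" "continuous_on UNIV h"
  shows "h \<in> borel_measurable M"
  using borel_measurable_continuous_onI[OF assms(2)] measurable_cong_sets[OF assms(1) refl] by blast

lemma int_bc:
  fixes h :: "'a::topological_space \<Rightarrow> real"
  assumes "prob_space M" "sets M = sets borel" "continuous_on UNIV h" "\<And>x. \<bar>h x\<bar> \<le> C"
  shows "integrable M h"
proof -
  interpret prob_space M by fact
  show ?thesis using meas_cont[OF assms(2,3)] assms(4) by (intro integrable_const_bound[where B=C]) auto
qed

lemma bc_integral_eq:
  fixes \<mu> \<nu> :: "(real^'n) measure" and f :: "real^'n \<Rightarrow> real"
  assumes pm: "prob_space \<mu>" and pn: "prob_space \<nu>" and sm: "sets \<mu> = sets borel" and sn: "sets \<nu> = sets borel"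
    and ch: "\<And>s. (\<integral>x. cis (s \<bullet> x) \<partial>\<mu>) = (\<integral>x. cis (s \<bullet> x) \<partial>\<nu>)"
    and fc: "continuous_on UNIV f" and fb: "\<And>x. \<bar>f x\<bar> \<le> B"
  shows "(\<integral>x. f x \<partial>\<mu>) = (\<integral>x. f x \<partial>\<nu>)"
proof -
  have B0: "B \<ge> 0" using fb[of 0] by (meson abs_ge_zero order_trans)
  have key: "\<bar>(\<integral>x. f x \<partial>\<mu>) - (\<integral>x. f x \<partial>\<nu>)\<bar> \<le> (4*B+4)*e" if e: "0 < e" "e \<le> 1" for e
  proof -
    obtain R1 where R1: "\<forall>R\<ge>R1. measure \<mu> {x. R < norm x} < e" using tight[OF pm sm e(1)] by blast
    obtain R2 where R2: "\<forall>R\<ge>R2. measure \<nu> {x. R < norm x} < e" using tight[OF pn sn e(1)] by blast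
    define R where "R = max (max R1 R2) 0"
    have hm: "measure \<mu> {x. R < norm x} < e" "measure \<nu> {x. R < norm x} < e" "R \<ge> 0"
    proof -
      have "R \<ge> R1" "R \<ge> R2" "R \<ge> 0" unfolding R_def by auto
      then show "measure \<mu> {x. R < norm x} < e" "measure \<nu> {x. R < norm x} < e" "R \<ge> 0"
        using R1 R2 by blast+
    qed
    define r where "r = R + 2"
    have r0: "r > 0" unfolding r_def using hm by auto
    define F where "F x = f x * max 0 (min 1 (R + 1 - norm x))" for x :: "real^'n"
    have Fc: "continuous_on UNIV F" unfolding F_def by (intro continuous_intros fc)
    have F0: "F x = 0" if "\<bar>x$j\<bar> = r" for x j
    proof -
      have "norm x \<ge> r" using component_le_norm_cart[of x j] that by simp
      then show ?thesis unfolding F_def r_def by auto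
    qed
    define K where "K = {x::real^'n. \<forall>j. \<bar>x$j\<bar> \<le> r}"
    obtain g where gc: "continuous_on (tor r ` K) g" and gF: "\<forall>x\<in>K. g (tor r x) = F x"
      using torus_factor[of r F, OF r0 Fc] F0 unfolding K_def by blast
    have ct: "continuous_on UNIV (tor r)" unfolding tor_def
      using r0 by (intro continuous_intros continuous_on_vec_lambda) auto
    have cK: "compact (tor r ` K)" unfolding K_def
      by (rule compact_continuous_image[OF continuous_on_subset[OF ct] compact_K]) auto
    obtain p where pp: "polynomial_function p" and pg: "\<forall>y\<in>tor r ` K. norm (g y - p y) < e"
      using Stone_Weierstrass_polynomial_function[OF cK gc e(1)] by blast
    have pc: "continuous_on UNIV (\<lambda>x. p (tor r x))"
      using continuous_on_polymonial_function[OF pp] ct by (rule continuous_on_compose2) auto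
    have FB: "\<bar>F x\<bar> \<le> B" for x
    proof -
      have "\<bar>F x\<bar> = \<bar>f x\<bar> * \<bar>max 0 (min 1 (R + 1 - norm x))\<bar>" unfolding F_def by (simp add: abs_mult)
      also have "\<dots> \<le> \<bar>f x\<bar> * 1" by (intro mult_left_mono) auto
      finally show ?thesis using fb[of x] by simp
    qed
    have pb: "\<bar>p (tor r x)\<bar> \<le> B + e" for x
    proof -
      obtain x' where x': "x' \<in> K" "tor r x' = tor r x" using tor_periodic[OF r0, of x] unfolding K_def by blast
      have "\<bar>g (tor r x') - p (tor r x')\<bar> < e" using pg x'(1) by auto
      then have "\<bar>p (tor r x')\<bar> \<le> \<bar>F x'\<bar> + e" using gF x'(1) by auto
      then show ?thesis using FB[of x'] x'(2) by simp
    qed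
    have ptrig: "trig (\<lambda>x. complex_of_real (p (tor r x)))"
      using pp real_polynomial_function_eq trig_poly by blast
    have peq: "(\<integral>x. p (tor r x) \<partial>\<mu>) = (\<integral>x. p (tor r x) \<partial>\<nu>)"
      using trig_integral_eq[OF pm pn sm sn ch ptrig] by simp
    have pt: "\<bar>f x - p (tor r x)\<bar> \<le> e + (2*B + e) * indicator {x. R < norm x} x" for x
    proof (cases "R < norm x")
      case True
      have "\<bar>f x - p (tor r x)\<bar> \<le> \<bar>f x\<bar> + \<bar>p (tor r x)\<bar>" by (rule abs_triangle_ineq4)
      then show ?thesis using fb[of x] pb[of x] e(1) True by simp
    next
      case False
      have "\<bar>x$j\<bar> \<le> r" for j using component_le_norm_cart[of x j] False unfolding r_def by linarith
      then have xK: "x \<in> K" unfolding K_def by blast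
      have "F x = f x" unfolding F_def using False by auto
      then have "\<bar>f x - p (tor r x)\<bar> < e" using pg xK gF by force
      then show ?thesis using False by auto
    qed
    have bnd: "\<bar>(\<integral>x. f x \<partial>M) - (\<integral>x. p (tor r x) \<partial>M)\<bar> \<le> e + (2*B + e) * e"
      if pM: "prob_space M" and sM: "sets M = sets borel" and hM: "measure M {x. R < norm x} < e" for M
    proof -
      have "\<bar>(\<integral>x. f x \<partial>M) - (\<integral>x. p (tor r x) \<partial>M)\<bar> \<le> e + (2*B + e) * measure M {x. R < norm x}"
        using B0 e by (intro int_diff_bound[OF pM int_bc[OF pM sM fc fb] int_bc[OF pM sM pc pb] _ _ pt])
          (auto simp: sM)
      also have "\<dots> \<le> e + (2*B + e) * e" using hM B0 e by (intro add_left_mono mult_left_mono) auto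
      finally show ?thesis .
    qed
    have "\<bar>(\<integral>x. f x \<partial>\<mu>) - (\<integral>x. f x \<partial>\<nu>)\<bar> \<le> 2 * (e + (2*B + e) * e)"
    proof -
      define c where "c = e + (2*B + e) * e"
      define a1 where "a1 = (\<integral>x. f x \<partial>\<mu>)"
      define a2 where "a2 = (\<integral>x. f x \<partial>\<nu>)"
      define b1 where "b1 = (\<integral>x. p (tor r x) \<partial>\<mu>)"
      define b2 where "b2 = (\<integral>x. p (tor r x) \<partial>\<nu>)"
      have "\<bar>a1 - b1\<bar> \<le> c" "\<bar>a2 - b2\<bar> \<le> c" "b1 = b2"
        using bnd[OF pm sm hm(1)] bnd[OF pn sn hm(2)] peq unfolding a1_def a2_def b1_def b2_def c_def by auto
      then have "\<bar>a1 - a2\<bar> \<le> 2 * c" by arith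
      then show ?thesis unfolding a1_def a2_def c_def .
    qed
    also have "\<dots> \<le> (4*B+4)*e" using e B0 by (simp add: algebra_simps mult_left_le)
    finally show ?thesis .
  qed
  show ?thesis
  proof (rule ccontr)
    define D where "D = \<bar>(\<integral>x. f x \<partial>\<mu>) - (\<integral>x. f x \<partial>\<nu>)\<bar>"
    assume "(\<integral>x. f x \<partial>\<mu>) \<noteq> (\<integral>x. f x \<partial>\<nu>)"
    then have D0: "D > 0" unfolding D_def by auto
    define e where "e = min 1 (D / (2*(4*B+4)))"
    have e0: "0 < e" "e \<le> 1" unfolding e_def using D0 B0 by auto
    have "D \<le> (4*B+4)*e" using key[OF e0] unfolding D_def .
    also have "\<dots> \<le> (4*B+4) * (D / (2*(4*B+4)))" unfolding e_def using B0 by (intro mult_left_mono) auto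
    also have "\<dots> = D / 2" using B0 by (simp add: field_simps)
    finally show False using D0 by simp
  qed
qed

lemma closed_approx_lim:
  fixes M :: "(real^'n) measure" and X :: "(real^'n) set"
  assumes pM: "prob_space M" and sM: "sets M = sets borel" and X: "closed X" "X \<noteq> {}"
  shows "(\<lambda>k. \<integral>x. max 0 (1 - (real k + 1) * infdist x X) \<partial>M) \<longlonglongrightarrow> measure M X"
proof -
  interpret prob_space M by (rule pM)
  have c: "continuous_on UNIV (\<lambda>x. max 0 (1 - (real k + 1) * infdist x X))" for k
    by (intro continuous_intros)
  have lim: "(\<lambda>k. max 0 (1 - (real k + 1) * infdist x X)) \<longlonglongrightarrow> indicator X x" for x
  proof (cases "x \<in> X")
    case True
    then have "infdist x X = 0" using in_closed_iff_infdist_zero[OF X] by blast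
    then show ?thesis using True by simp
  next
    case False
    then have d: "infdist x X > 0" using infdist_pos_not_in_closed[OF X] by blast
    obtain N :: nat where N: "1 / infdist x X < real N" using reals_Archimedean2 by blast
    have "max 0 (1 - (real k + 1) * infdist x X) = 0" if "k \<ge> N" for k
    proof -
      have "1 < real N * infdist x X" using N d by (simp add: field_simps)
      also have "\<dots> \<le> (real k + 1) * infdist x X" using that d by (intro mult_right_mono) auto
      finally show ?thesis by simp
    qed
    then have "eventually (\<lambda>k. max 0 (1 - (real k + 1) * infdist x X) = 0) sequentially"
      unfolding eventually_sequentially by blast
    then show ?thesis using False by (simp add: tendsto_eventually)
  qed
  have XM: "X \<in> sets M" using X sM by auto
  have "(\<lambda>k. \<integral>x. max 0 (1 - (real k + 1) * infdist x X) \<partial>M) \<longlonglongrightarrow> (\<integral>x. indicator X x \<partial>M)"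
  proof (rule integral_dominated_convergence[where w="\<lambda>_. 1"])
    show "indicat_real X \<in> borel_measurable M" using XM by simp
    show "(\<lambda>x. max 0 (1 - (real k + 1) * infdist x X)) \<in> borel_measurable M" for k using meas_cont[OF sM c] .
    show "integrable M (\<lambda>_. 1::real)" by simp
    show "AE x in M. (\<lambda>k. max 0 (1 - (real k + 1) * infdist x X)) \<longlonglongrightarrow> indicator X x" using lim by simp
    show "AE x in M. norm (max 0 (1 - (real k + 1) * infdist x X)) \<le> 1" for k
    proof (rule AE_I2)
      fix x
      have "0 \<le> (real k + 1) * infdist x X" by (simp add: infdist_nonneg)
      then show "norm (max 0 (1 - (real k + 1) * infdist x X)) \<le> 1" by simp
    qed
  qed
  then show ?thesis using XM by simp
qed

theorem char_unique:
  fixes \<mu> \<nu> :: "(real^'n) measure"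
  assumes pm: "prob_space \<mu>" and pn: "prob_space \<nu>" and sm: "sets \<mu> = sets borel" and sn: "sets \<nu> = sets borel"
    and ch: "\<And>s. (\<integral>x. cis (s \<bullet> x) \<partial>\<mu>) = (\<integral>x. cis (s \<bullet> x) \<partial>\<nu>)"
  shows "\<mu> = \<nu>"
proof -
  have sb: "sets borel = sigma_sets (UNIV :: (real^'n) set) (Collect closed)"
    by (subst borel_eq_closed) (simp add: sets_measure_of)
  show ?thesis
  proof (rule measure_eqI_generator_eq[where \<Omega>=UNIV and E="Collect closed" and A="\<lambda>_. UNIV"])
    show "Int_stable (Collect closed :: (real^'n) set set)" by (auto simp: Int_stable_def)
    show "Collect closed \<subseteq> Pow UNIV" by auto
    show "sets \<mu> = sigma_sets UNIV (Collect closed)" using sm sb by simp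
    show "sets \<nu> = sigma_sets UNIV (Collect closed)" using sn sb by simp
    show "range (\<lambda>_. UNIV) \<subseteq> Collect closed" by auto
    show "(\<Union>i::nat. UNIV) = (UNIV :: (real^'n) set)" by simp
    show "emeasure \<mu> UNIV \<noteq> \<infinity>" for i :: nat
    proof -
      have "space \<mu> = UNIV" using sets_eq_imp_space_eq[OF sm] by simp
      then show ?thesis using prob_space.emeasure_space_1[OF pm] by simp
    qed
  next
    fix X :: "(real^'n) set" assume "X \<in> Collect closed"
    then have X: "closed X" by simp
    show "emeasure \<mu> X = emeasure \<nu> X"
    proof (cases "X = {}")
      case False
      have eqk: "(\<integral>x. max 0 (1 - (real k + 1) * infdist x X) \<partial>\<mu>) = (\<integral>x. max 0 (1 - (real k + 1) * infdist x X) \<partial>\<nu>)" for k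
        by (rule bc_integral_eq[OF pm pn sm sn ch, where B=1]) (auto intro!: continuous_intros simp: infdist_nonneg)
      have "measure \<mu> X = measure \<nu> X"
        using closed_approx_lim[OF pm sm X False] closed_approx_lim[OF pn sn X False] unfolding eqk
        using LIMSEQ_unique by blast
      interpret m1: prob_space \<mu> by (rule pm)
      interpret m2: prob_space \<nu> by (rule pn)
      show ?thesis using \<open>measure \<mu> X = measure \<nu> X\<close> by (simp add: m1.emeasure_eq_measure m2.emeasure_eq_measure)
    qed simp
  qed
qed

lemma sum_delta_l:
  fixes a b :: "'n::finite \<Rightarrow> 'a::comm_ring_1"
  shows "(\<Sum>k\<in>UNIV. (if i = k then a k else 0) * b k) = (a i * b i :: 'a::comm_ring_1)"
proof -
  have "(\<Sum>k\<in>UNIV. (if i = k then a k else 0) * b k) = (\<Sum>k\<in>UNIV. if i = k then a k * b k else 0)"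
    by (rule sum.cong) auto
  then show ?thesis by simp
qed

lemma sum_delta_r:
  fixes a b :: "'n::finite \<Rightarrow> 'a::comm_ring_1"
  shows "(\<Sum>k\<in>UNIV. b k * (if k = j then a k else 0)) = (b j * a j :: 'a::comm_ring_1)"
proof -
  have "(\<Sum>k\<in>UNIV. b k * (if k = j then a k else 0)) = (\<Sum>k\<in>UNIV. if k = j then b k * a k else 0)"
    by (rule sum.cong) auto
  then show ?thesis by simp
qed

lemma inner_real_vec: "(x::real^'n) \<bullet> y = (\<Sum>a\<in>UNIV. x$a * y$a)"
  by (simp add: inner_vec_def)

lemma onb_complete:
  fixes u :: "'n \<Rightarrow> real^'n"
  assumes orth: "\<forall>i j. u i \<bullet> u j = (if i = j then 1 else 0)"
  shows "(\<Sum>j\<in>UNIV. u j $ a * u j $ b) = (if a = b then 1 else 0)"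
proof -
  define U :: "real^'n^'n" where "U = (\<chi> i k. u i $ k)"
  have "U ** transpose U = mat 1"
    unfolding U_def by (simp add: vec_eq_iff matrix_matrix_mult_def transpose_def mat_def orth[rule_format, unfolded inner_real_vec])
  then have "transpose U ** U = mat 1" using matrix_left_right_inverse by blast
  then have "(transpose U ** U) $ a $ b = mat 1 $ a $ b" by simp
  then show ?thesis unfolding U_def by (simp add: matrix_matrix_mult_def transpose_def mat_def)
qed

lemma onb_expand:
  fixes u :: "'n \<Rightarrow> real^'n"
  assumes orth: "\<forall>i j. u i \<bullet> u j = (if i = j then 1 else 0)"
  shows "x = (\<Sum>i\<in>UNIV. (u i \<bullet> x) *\<^sub>R u i)"
proof -
  have "x $ a = (\<Sum>i\<in>UNIV. (u i \<bullet> x) * u i $ a)" for a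
  proof -
    have "(\<Sum>i\<in>UNIV. (u i \<bullet> x) * u i $ a) = (\<Sum>i\<in>UNIV. \<Sum>b\<in>UNIV. u i $ a * u i $ b * x $ b)"
      by (simp add: inner_real_vec sum_distrib_left sum_distrib_right mult_ac)
    also have "\<dots> = (\<Sum>b\<in>UNIV. (\<Sum>i\<in>UNIV. u i $ a * u i $ b) * x $ b)"
      by (subst sum.swap) (simp add: sum_distrib_right)
    also have "\<dots> = x $ a" by (simp only: onb_complete[OF orth] sum_delta_l)
    finally show ?thesis by simp
  qed
  then show ?thesis by (simp add: vec_eq_iff sum_component)
qed

lemma onb_inner:
  fixes u :: "'n \<Rightarrow> real^'n"
  assumes orth: "\<forall>i j. u i \<bullet> u j = (if i = j then 1 else 0)"
  shows "(\<Sum>i\<in>UNIV. c i *\<^sub>R u i) \<bullet> (\<Sum>i\<in>UNIV. d i *\<^sub>R u i) = (\<Sum>i\<in>UNIV. c i * d i)"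
  by (simp add: inner_sum_left inner_sum_right orth if_distrib cong: if_cong) (simp add: mult.commute)

lemma onb_coord:
  fixes u :: "'n \<Rightarrow> real^'n"
  assumes orth: "\<forall>i j. u i \<bullet> u j = (if i = j then 1 else 0)"
  shows "u j \<bullet> (\<Sum>i\<in>UNIV. c i *\<^sub>R u i) = c j"
  by (simp add: inner_sum_right orth if_distrib cong: if_cong)

lemma onb_dot:
  fixes u :: "'n \<Rightarrow> real^'n"
  assumes orth: "\<forall>i j. u i \<bullet> u j = (if i = j then 1 else 0)"
  shows "s \<bullet> x = (\<Sum>i\<in>UNIV. (u i \<bullet> s) * (u i \<bullet> x))"
proof -
  have "s \<bullet> x = (\<Sum>i\<in>UNIV. (u i \<bullet> s) *\<^sub>R u i) \<bullet> (\<Sum>i\<in>UNIV. (u i \<bullet> x) *\<^sub>R u i)"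
    using onb_expand[OF orth, of s] onb_expand[OF orth, of x] by simp
  then show ?thesis using onb_inner[OF orth] by simp
qed

definition cdot :: "real^'n \<Rightarrow> complex^'n \<Rightarrow> complex" where
  "cdot u w = (\<Sum>a\<in>UNIV. complex_of_real (u$a) * w$a)"

lemma cdot_add: "cdot u (v + w) = cdot u v + cdot u w"
  by (simp add: cdot_def distrib_left sum.distrib)
lemma cdot_scale: "cdot u (c *s w) = c * cdot u w"
  by (simp add: cdot_def sum_distrib_left mult_ac)
lemma cdot_zero: "cdot u 0 = 0"
  by (simp add: cdot_def)
lemma cdot_sum: "finite I \<Longrightarrow> cdot u (\<Sum>i\<in>I. f i) = (\<Sum>i\<in>I. cdot u (f i))"
  by (induction I rule: finite_induct) (simp_all add: cdot_zero cdot_add)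
lemma cdot_cvec: "cdot u (cvec v) = complex_of_real (u \<bullet> v)"
  by (simp add: cdot_def cvec_def inner_real_vec)

lemma cdot_mat:
  fixes A :: "real^'n^'n"
  assumes sym: "\<forall>i j. A $ i $ j = A $ j $ i" and eig: "A *v u = lam *\<^sub>R u"
  shows "cdot u (cmat A *v w) = complex_of_real lam * cdot u w"
proof -
  have col: "(\<Sum>a\<in>UNIV. u$a * A$a$b) = lam * u$b" for b
  proof -
    have "(\<Sum>a\<in>UNIV. u$a * A$a$b) = (\<Sum>a\<in>UNIV. A$b$a * u$a)"
      by (rule sum.cong[OF refl]) (metis sym mult.commute)
    also have "\<dots> = (A *v u) $ b" by (simp add: matrix_vector_mult_def)
    finally show ?thesis using eig by simp
  qed
  have "cdot u (cmat A *v w) = (\<Sum>a\<in>UNIV. \<Sum>b\<in>UNIV. complex_of_real (u$a * A$a$b) * w$b)"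
    by (simp add: cdot_def matrix_vector_mult_def cmat_def sum_distrib_left mult_ac)
  also have "\<dots> = (\<Sum>b\<in>UNIV. \<Sum>a\<in>UNIV. complex_of_real (u$a * A$a$b) * w$b)"
    by (rule sum.swap)
  also have "\<dots> = (\<Sum>b\<in>UNIV. complex_of_real (\<Sum>a\<in>UNIV. u$a * A$a$b) * w$b)"
    by (simp add: sum_distrib_right)
  also have "\<dots> = complex_of_real lam * cdot u w"
    by (simp add: col cdot_def sum_distrib_left mult_ac)
  finally show ?thesis .
qed

lemma lap_sym:
  fixes W :: "real^'n^'n"
  assumes "\<forall>i j. W $ i $ j = W $ j $ i"
  shows "\<forall>i j. norm_laplacian W $ i $ j = norm_laplacian W $ j $ i"
proof -
  have e1: "(deg_inv_sqrt W ** W) $ i $ k = (1 / sqrt (degree W i)) * W$i$k" for i k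
    unfolding matrix_matrix_mult_def deg_inv_sqrt_def vec_lambda_beta by (rule sum_delta_l)
  have e: "(deg_inv_sqrt W ** W ** deg_inv_sqrt W) $ i $ j = W$i$j * (1 / sqrt (degree W i)) * (1 / sqrt (degree W j))" for i j
  proof -
    define D where "D = deg_inv_sqrt W"
    have "(D ** W ** D) $ i $ j = (\<Sum>k\<in>UNIV. (D ** W) $ i $ k * D $ k $ j)"
      by (simp only: matrix_matrix_mult_def[of "D ** W" D] vec_lambda_beta)
    then have "(deg_inv_sqrt W ** W ** deg_inv_sqrt W) $ i $ j = (\<Sum>k\<in>UNIV. (deg_inv_sqrt W ** W) $ i $ k * (if k = j then 1 / sqrt (degree W k) else 0))"
      unfolding D_def by (simp add: deg_inv_sqrt_def[of W])
    also have "\<dots> = (deg_inv_sqrt W ** W) $ i $ j * (1 / sqrt (degree W j))" by (rule sum_delta_r)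
    finally show ?thesis using e1 by simp
  qed
  show ?thesis using assms by (simp add: norm_laplacian_def e mat_def mult_ac)
qed

lemma cvec_complete:
  fixes u :: "'n \<Rightarrow> real^'n" and w :: "complex^'n"
  assumes orth: "\<forall>i j. u i \<bullet> u j = (if i = j then 1 else 0)"
    and z: "\<forall>j. cdot (u j) w = 0"
  shows "w = 0"
proof -
  have "w $ a = 0" for a
  proof -
    have "(\<Sum>b\<in>UNIV. complex_of_real (\<Sum>j\<in>UNIV. u j $ a * u j $ b) * w $ b) = (\<Sum>b\<in>UNIV. (if a = b then 1 else 0) * w $ b)"
      by (rule sum.cong) (auto simp: onb_complete[OF orth])
    then have "w $ a = (\<Sum>b\<in>UNIV. complex_of_real (\<Sum>j\<in>UNIV. u j $ a * u j $ b) * w $ b)"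
      by (simp only: sum_delta_l) simp
    also have "\<dots> = (\<Sum>j\<in>UNIV. complex_of_real (u j $ a) * cdot (u j) w)"
      by (simp add: cdot_def sum_distrib_left sum_distrib_right mult_ac) (rule sum.swap)
    also have "\<dots> = 0" using z by simp
    finally show ?thesis .
  qed
  then show ?thesis by (simp add: vec_eq_iff)
qed

locale arma =
  fixes W :: "real^'n^'n"
    and u :: "'n \<Rightarrow> real^'n" and mu :: "'n \<Rightarrow> real"
    and M :: "'a measure" and m :: "real^'n" and e :: "nat \<Rightarrow> 'a \<Rightarrow> real^'n"
    and sigma c :: real and K :: nat and psi phi :: "nat \<Rightarrow> complex"
  assumes W_sym: "\<forall>i j. W $ i $ j = W $ j $ i"
    and W_nonneg: "\<forall>i j. W $ i $ j \<ge> 0"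
    and deg_pos: "\<forall>i. degree W i > 0"
    and eig: "\<forall>i. norm_laplacian W *v u i = mu i *\<^sub>R u i"
    and orthonormal: "\<forall>i j. u i \<bullet> u j = (if i = j then 1 else 0)"
    and prob: "prob_space M"
    and e_meas: "\<forall>t. e t \<in> borel_measurable M"
    and e_indep: "prob_space.indep_vars M (\<lambda>_. borel) e UNIV"
    and e_gauss: "\<forall>t. gaussian_vec 0 (sigma\<^sup>2 *\<^sub>R mat 1) (distr M borel (e t))"
    and K_pos: "K \<ge> 1"
    and real_response: "\<forall>k. (\<Sum>l\<in>{1..K}. phi l * psi l ^ k) \<in> \<real>"
    and stable: "(MAX l\<in>{1..K}. cmod (psi l)) * spectral_radius (norm_laplacian W) < 1"
begin

abbreviation "Lr \<equiv> norm_laplacian W"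

definition gam :: "nat \<Rightarrow> real" where "gam k = Re (\<Sum>l\<in>{1..K}. phi l * psi l ^ k)"

lemma gam_of: "complex_of_real (gam k) = (\<Sum>l\<in>{1..K}. phi l * psi l ^ k)"
  using real_response[rule_format, of k] unfolding gam_def
  by (simp add: complex_is_Real_iff complex_eq_iff)

definition G :: "nat \<Rightarrow> real \<Rightarrow> real" where "G k x = gam k * x^k + (if k = 0 then c else 0)"

lemma Lsym: "\<forall>i j. Lr $ i $ j = Lr $ j $ i" using lap_sym[OF W_sym] .

lemma cdot_L: "cdot (u i) (cmat Lr *v w) = complex_of_real (mu i) * cdot (u i) w"
  using cdot_mat[OF Lsym eig[rule_format, of i]] .

lemma branch_coord:
  "cdot (u i) (arma_branch ps ph (cmat Lr) y t) = (\<Sum>k\<le>t. ph * (ps * complex_of_real (mu i))^k * cdot (u i) (y (t - k)))"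
proof (induction t)
  case 0
  then show ?case by (simp add: cdot_add cdot_scale cdot_zero)
next
  case (Suc t)
  have "cdot (u i) (arma_branch ps ph (cmat Lr) y (Suc t)) =
        ps * complex_of_real (mu i) * cdot (u i) (arma_branch ps ph (cmat Lr) y t) + ph * cdot (u i) (y (Suc t))"
    by (simp add: cdot_add cdot_scale cdot_L)
  also have "\<dots> = (\<Sum>k\<le>t. ph * (ps * complex_of_real (mu i))^(Suc k) * cdot (u i) (y (t - k))) + ph * cdot (u i) (y (Suc t))"
    unfolding Suc.IH by (simp add: sum_distrib_left mult_ac)
  also have "\<dots> = (\<Sum>k\<le>Suc t. ph * (ps * complex_of_real (mu i))^k * cdot (u i) (y (Suc t - k)))"
    by (subst sum.atMost_Suc_shift) simp
  finally show ?case .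
qed

lemma output_coord:
  "cdot (u i) (arma_output K c psi phi (cmat Lr) y t) =
     (\<Sum>k\<le>t. complex_of_real (G k (mu i)) * cdot (u i) (y (t - k)))"
proof -
  have "cdot (u i) (arma_output K c psi phi (cmat Lr) y t) =
        (\<Sum>l\<in>{1..K}. \<Sum>k\<le>t. phi l * (psi l * complex_of_real (mu i))^k * cdot (u i) (y (t - k)))
         + complex_of_real c * cdot (u i) (y t)"
    by (simp add: arma_output_def cdot_add cdot_scale cdot_sum branch_coord)
  also have "(\<Sum>l\<in>{1..K}. \<Sum>k\<le>t. phi l * (psi l * complex_of_real (mu i))^k * cdot (u i) (y (t - k)))
      = (\<Sum>k\<le>t. complex_of_real (gam k * mu i ^ k) * cdot (u i) (y (t - k)))"
    by (subst sum.swap) (simp add: gam_of sum_distrib_right sum_distrib_left power_mult_distrib mult_ac)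
  also have "complex_of_real c * cdot (u i) (y t) = (\<Sum>k\<le>t. complex_of_real (if k = 0 then c else 0) * cdot (u i) (y (t - k)))"
  proof -
    have "(\<Sum>k\<le>t. complex_of_real (if k = 0 then c else 0) * cdot (u i) (y (t - k))) =
          (\<Sum>k\<le>t. if k = 0 then complex_of_real c * cdot (u i) (y t) else 0)"
      by (rule sum.cong) auto
    then show ?thesis by simp
  qed
  finally show ?thesis by (simp add: G_def sum.distrib[symmetric] distrib_right)
qed

lemma re_vec_coord: "v \<bullet> re_vec w = Re (cdot v w)"
  by (simp add: inner_real_vec re_vec_def cdot_def)

definition zz :: "nat \<Rightarrow> 'a \<Rightarrow> real^'n" where
  "zz t \<omega> = re_vec (arma_output K c psi phi (cmat Lr) (\<lambda>t. cvec (m + e t \<omega>)) t)"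

lemma zz_closed:
  "zz t \<omega> = (\<Sum>i\<in>UNIV. (\<Sum>k\<le>t. G k (mu i) * (u i \<bullet> (m + e (t - k) \<omega>))) *\<^sub>R u i)"
proof -
  have "u i \<bullet> zz t \<omega> = (\<Sum>k\<le>t. G k (mu i) * (u i \<bullet> (m + e (t - k) \<omega>)))" for i
    unfolding zz_def re_vec_coord output_coord cdot_cvec
    by (simp add: Re_sum)
  then show ?thesis using onb_expand[OF orthonormal, of "zz t \<omega>"] by simp
qed

lemma cmat_cvec: "cmat A *v cvec v = cvec (A *v v)"
  by (simp add: vec_eq_iff cmat_def cvec_def matrix_vector_mult_def)

lemma cvec_scale: "cvec (a *\<^sub>R v) = complex_of_real a *s cvec v"
  by (simp add: vec_eq_iff cvec_def)

lemma u_nz: "u i \<noteq> 0"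
  using orthonormal[rule_format, of i i] by auto

lemma cvec_nz: "v \<noteq> 0 \<Longrightarrow> cvec v \<noteq> 0"
  by (simp add: vec_eq_iff cvec_def)

lemma mu_le_rho: "\<bar>mu i\<bar> \<le> spectral_radius Lr"
proof -
  define S where "S = {cmod ev | ev. \<exists>v::complex^'n. v \<noteq> 0 \<and> cmat Lr *v v = ev *s v}"
  have inS: "\<bar>mu i\<bar> \<in> S"
  proof -
    have "cmat Lr *v cvec (u i) = complex_of_real (mu i) *s cvec (u i)"
      by (simp add: cmat_cvec eig cvec_scale)
    moreover have "cvec (u i) \<noteq> 0" using cvec_nz u_nz by blast
    ultimately show ?thesis unfolding S_def by force
  qed
  have sub: "S \<subseteq> range (\<lambda>j. \<bar>mu j\<bar>)"
  proof
    fix x assume "x \<in> S"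
    then obtain ev v where x: "x = cmod ev" and v: "v \<noteq> 0" "cmat Lr *v v = ev *s v" unfolding S_def by blast
    obtain j where j: "cdot (u j) v \<noteq> 0" using cvec_complete[OF orthonormal, of v] v(1) by blast
    have "complex_of_real (mu j) * cdot (u j) v = ev * cdot (u j) v"
      using cdot_L[of j v] v(2) by (simp add: cdot_scale) (metis eq_commute)
    then have "ev = complex_of_real (mu j)" using j by simp
    then show "x \<in> range (\<lambda>j. \<bar>mu j\<bar>)" using x by simp
  qed
  have "finite S" using finite_subset[OF sub] by simp
  then have "\<bar>mu i\<bar> \<le> Max S" using inS by (rule Max_ge)
  then show ?thesis unfolding spectral_radius_def S_def .
qed

lemma stab:
  assumes l: "l \<in> {1..K}"
  shows "cmod (psi l * complex_of_real (mu i)) < 1"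
proof -
  have "cmod (psi l) \<le> (MAX l\<in>{1..K}. cmod (psi l))" using l by (intro Max_ge) auto
  moreover have "\<bar>mu i\<bar> \<le> spectral_radius Lr" using mu_le_rho[of i] by linarith
  ultimately have "cmod (psi l) * \<bar>mu i\<bar> \<le> (MAX l\<in>{1..K}. cmod (psi l)) * spectral_radius Lr"
  proof (rule mult_mono)
    show "0 \<le> (MAX l\<in>{1..K}. cmod (psi l))" using \<open>cmod (psi l) \<le> _\<close> norm_ge_zero[of "psi l"] by linarith
  qed auto
  then show ?thesis using stable by (simp add: norm_mult)
qed

lemma geo_le: "norm (q::complex) < 1 \<Longrightarrow> (\<lambda>t. \<Sum>k\<le>t. q^k) \<longlonglongrightarrow> 1 / (1 - q)"
  using geometric_sums[of q] by (simp add: sums_def_le)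

lemma sum_swap3: "(\<Sum>k\<in>B. \<Sum>l\<in>A. \<Sum>l'\<in>C. F l l' k) = (\<Sum>l\<in>A. \<Sum>l'\<in>C. \<Sum>k\<in>B. F l l' k)"
proof -
  have "(\<Sum>k\<in>B. \<Sum>l\<in>A. \<Sum>l'\<in>C. F l l' k) = (\<Sum>l\<in>A. \<Sum>k\<in>B. \<Sum>l'\<in>C. F l l' k)" by (rule sum.swap)
  also have "\<dots> = (\<Sum>l\<in>A. \<Sum>l'\<in>C. \<Sum>k\<in>B. F l l' k)" by (rule sum.cong[OF refl], rule sum.swap)
  finally show ?thesis .
qed

definition hh :: "real \<Rightarrow> complex" where
  "hh x = complex_of_real c + (\<Sum>l\<in>{1..K}. phi l / (1 - psi l * complex_of_real x))"

lemma S1: "(\<lambda>t. \<Sum>k\<le>t. G k (mu i)) \<longlonglongrightarrow> Re (hh (mu i))"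
proof -
  have e: "complex_of_real (\<Sum>k\<le>t. G k (mu i)) = complex_of_real c + (\<Sum>l\<in>{1..K}. phi l * (\<Sum>k\<le>t. (psi l * complex_of_real (mu i))^k))" for t
  proof -
    have a: "(\<Sum>k\<le>t. (if k = 0 then c else 0)) = c" by (simp add: sum.delta)
    have "complex_of_real (\<Sum>k\<le>t. G k (mu i)) = (\<Sum>k\<le>t. complex_of_real (gam k) * complex_of_real (mu i) ^ k) + complex_of_real c"
      unfolding G_def sum.distrib a by simp
    also have "\<dots> = complex_of_real c + (\<Sum>l\<in>{1..K}. phi l * (\<Sum>k\<le>t. (psi l * complex_of_real (mu i))^k))"
    proof -
      have "(\<Sum>k\<le>t. complex_of_real (gam k) * complex_of_real (mu i) ^ k) =
            (\<Sum>k\<le>t. \<Sum>l\<in>{1..K}. phi l * (psi l * complex_of_real (mu i))^k)"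
        unfolding gam_of by (simp add: sum_distrib_right sum_distrib_left power_mult_distrib mult_ac)
      also have "\<dots> = (\<Sum>l\<in>{1..K}. \<Sum>k\<le>t. phi l * (psi l * complex_of_real (mu i))^k)"
        by (rule sum.swap)
      finally show ?thesis by (simp add: sum_distrib_left)
    qed
    finally show ?thesis .
  qed
  have "(\<lambda>t. complex_of_real c + (\<Sum>l\<in>{1..K}. phi l * (\<Sum>k\<le>t. (psi l * complex_of_real (mu i))^k)))
        \<longlonglongrightarrow> complex_of_real c + (\<Sum>l\<in>{1..K}. phi l * (1 / (1 - psi l * complex_of_real (mu i))))"
    by (intro tendsto_intros geo_le stab) auto
  then have "(\<lambda>t. complex_of_real (\<Sum>k\<le>t. G k (mu i))) \<longlonglongrightarrow> hh (mu i)"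
    unfolding e hh_def by simp
  from tendsto_Re[OF this] show ?thesis by simp
qed

definition Rinf :: "real \<Rightarrow> real" where
  "Rinf x = c\<^sup>2 + 2 * c * gam 0 + Re (\<Sum>l\<in>{1..K}. \<Sum>l'\<in>{1..K}. phi l * cnj (phi l') / (1 - psi l * cnj (psi l') * complex_of_real (x\<^sup>2)))"

lemma S2: "(\<lambda>t. \<Sum>k\<le>t. (G k (mu i))\<^sup>2) \<longlonglongrightarrow> Rinf (mu i)"
proof -
  define x where "x = mu i"
  have Gsq: "(G k x)\<^sup>2 = (gam k * x^k)\<^sup>2 + (if k = 0 then c\<^sup>2 + 2 * c * gam 0 else 0)" for k
    unfolding G_def by (auto simp: power2_eq_square algebra_simps)
  have gsq: "complex_of_real ((gam k * x^k)\<^sup>2) =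
     (\<Sum>l\<in>{1..K}. \<Sum>l'\<in>{1..K}. phi l * cnj (phi l') * (psi l * cnj (psi l') * complex_of_real (x\<^sup>2))^k)" for k
  proof -
    define g where "g = (\<Sum>l\<in>{1..K}. phi l * (psi l * complex_of_real x)^k)"
    have gr: "complex_of_real (gam k * x^k) = g"
      unfolding g_def by (simp add: gam_of sum_distrib_right sum_distrib_left power_mult_distrib mult_ac)
    have "complex_of_real ((gam k * x^k)\<^sup>2) = g * cnj g"
      using gr by (metis complex_cnj_complex_of_real of_real_mult power2_eq_square)
    also have "\<dots> = (\<Sum>l\<in>{1..K}. \<Sum>l'\<in>{1..K}. phi l * cnj (phi l') * (psi l * cnj (psi l') * complex_of_real (x\<^sup>2))^k)"
      unfolding g_def by (simp add: sum_distrib_left sum_distrib_right power_mult_distrib power2_eq_square mult_ac)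
        (rule sum.swap)
    finally show ?thesis .
  qed
  have a: "(\<Sum>k\<le>t. (if k = 0 then c\<^sup>2 + 2 * c * gam 0 else 0)) = c\<^sup>2 + 2 * c * gam 0" for t :: nat
    by (subst sum.delta) auto
  have e: "complex_of_real (\<Sum>k\<le>t. (G k x)\<^sup>2) = complex_of_real (c\<^sup>2 + 2 * c * gam 0) +
      (\<Sum>l\<in>{1..K}. \<Sum>l'\<in>{1..K}. phi l * cnj (phi l') * (\<Sum>k\<le>t. (psi l * cnj (psi l') * complex_of_real (x\<^sup>2))^k))" for t
  proof -
    have "complex_of_real (\<Sum>k\<le>t. (G k x)\<^sup>2) = (\<Sum>k\<le>t. complex_of_real ((gam k * x^k)\<^sup>2)) + complex_of_real (c\<^sup>2 + 2 * c * gam 0)"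
      unfolding Gsq sum.distrib a by simp
    also have "\<dots> = complex_of_real (c\<^sup>2 + 2 * c * gam 0) +
      (\<Sum>l\<in>{1..K}. \<Sum>l'\<in>{1..K}. phi l * cnj (phi l') * (\<Sum>k\<le>t. (psi l * cnj (psi l') * complex_of_real (x\<^sup>2))^k))"
      unfolding gsq by (subst sum_swap3) (simp add: sum_distrib_left add.commute)
    finally show ?thesis .
  qed
  have nq: "norm (psi l * cnj (psi l') * complex_of_real (x\<^sup>2)) < 1" if "l \<in> {1..K}" "l' \<in> {1..K}" for l l'
  proof -
    have "norm (psi l * cnj (psi l') * complex_of_real (x\<^sup>2)) = cmod (psi l * complex_of_real x) * cmod (psi l' * complex_of_real x)"
      by (simp add: norm_mult power2_eq_square)
    also have "\<dots> < 1 * 1"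
      using stab[OF that(1), of i] stab[OF that(2), of i] unfolding x_def
      by (intro mult_strict_mono') auto
    finally show ?thesis by simp
  qed
  have "(\<lambda>t. complex_of_real (c\<^sup>2 + 2 * c * gam 0) +
      (\<Sum>l\<in>{1..K}. \<Sum>l'\<in>{1..K}. phi l * cnj (phi l') * (\<Sum>k\<le>t. (psi l * cnj (psi l') * complex_of_real (x\<^sup>2))^k)))
     \<longlonglongrightarrow> complex_of_real (c\<^sup>2 + 2 * c * gam 0) +
      (\<Sum>l\<in>{1..K}. \<Sum>l'\<in>{1..K}. phi l * cnj (phi l') * (1 / (1 - psi l * cnj (psi l') * complex_of_real (x\<^sup>2))))"
    by (intro tendsto_intros geo_le nq) auto
  then have "(\<lambda>t. complex_of_real (\<Sum>k\<le>t. (G k x)\<^sup>2)) \<longlonglongrightarrow> complex_of_real (c\<^sup>2 + 2 * c * gam 0) +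
      (\<Sum>l\<in>{1..K}. \<Sum>l'\<in>{1..K}. phi l * cnj (phi l') / (1 - psi l * cnj (psi l') * complex_of_real (x\<^sup>2)))"
    unfolding e by simp
  from tendsto_Re[OF this] show ?thesis unfolding Rinf_def x_def by simp
qed

lemma Rinf_nonneg: "Rinf (mu i) \<ge> 0"
  by (rule LIMSEQ_le_const[OF S2]) (auto intro!: exI[of _ 0] sum_nonneg)

lemma S3:
  "Re ((\<Sum>l\<in>{1..K}. \<Sum>l'\<in>{1..K}. complex_of_real (sigma\<^sup>2) * phi l * cnj (phi l')
          / (1 - psi l * cnj (psi l') * complex_of_real (x\<^sup>2)))
        + complex_of_real (c * sigma\<^sup>2) * (complex_of_real c + 2 * (\<Sum>l\<in>{1..K}. phi l)))
   = sigma\<^sup>2 * Rinf x"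
proof -
  have g0: "gam 0 = Re (\<Sum>l\<in>{1..K}. phi l)" unfolding gam_def by simp
  have "(\<Sum>l\<in>{1..K}. \<Sum>l'\<in>{1..K}. complex_of_real (sigma\<^sup>2) * phi l * cnj (phi l')
          / (1 - psi l * cnj (psi l') * complex_of_real (x\<^sup>2)))
       = complex_of_real (sigma\<^sup>2) * (\<Sum>l\<in>{1..K}. \<Sum>l'\<in>{1..K}. phi l * cnj (phi l')
          / (1 - psi l * cnj (psi l') * complex_of_real (x\<^sup>2)))"
    by (simp add: sum_distrib_left mult_ac)
  moreover define A where "A = (\<Sum>l\<in>{1..K}. \<Sum>l'\<in>{1..K}. phi l * cnj (phi l')
          / (1 - psi l * cnj (psi l') * complex_of_real (x\<^sup>2)))"
  moreover define S where "S = (\<Sum>l\<in>{1..K}. phi l)"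
  ultimately have "Re ((\<Sum>l\<in>{1..K}. \<Sum>l'\<in>{1..K}. complex_of_real (sigma\<^sup>2) * phi l * cnj (phi l')
          / (1 - psi l * cnj (psi l') * complex_of_real (x\<^sup>2)))
        + complex_of_real (c * sigma\<^sup>2) * (complex_of_real c + 2 * (\<Sum>l\<in>{1..K}. phi l)))
      = Re (complex_of_real (sigma\<^sup>2) * A + complex_of_real (c * sigma\<^sup>2) * (complex_of_real c + 2 * S))"
    by simp
  also have "\<dots> = sigma\<^sup>2 * Re A + c * sigma\<^sup>2 * (c + 2 * Re S)" by simp
  also have "\<dots> = sigma\<^sup>2 * Rinf x" unfolding Rinf_def g0 A_def[symmetric] S_def[symmetric]
    by (simp add: algebra_simps power2_eq_square)
  finally show ?thesis .
qed

end

lemma cis_sum: "finite J \<Longrightarrow> cis (a + (\<Sum>j\<in>J. f j)) = cis a * (\<Prod>j\<in>J. cis (f j))"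
proof (induction J rule: finite_induct)
  case (insert x F)
  have s: "(\<Sum>j\<in>insert x F. f j) = f x + (\<Sum>j\<in>F. f j)" using insert(1,2) by simp
  have "cis (a + (\<Sum>j\<in>F. f j)) * cis (f x) = cis (a + (\<Sum>j\<in>insert x F. f j))"
    unfolding s by (simp add: cis_mult add_ac)
  then have "cis (a + (\<Sum>j\<in>insert x F. f j)) = cis a * (\<Prod>j\<in>F. cis (f j)) * cis (f x)"
    using insert(3) by simp
  moreover have "(\<Prod>j\<in>insert x F. cis (f j)) = cis (f x) * (\<Prod>j\<in>F. cis (f j))" using insert(1,2) by simp
  ultimately show ?case by (simp add: mult_ac)
qed simp

lemma sum_flip: "(\<Sum>k\<le>(t::nat). f k) = (\<Sum>j\<le>t. f (t - j))"
  by (rule sum.reindex_bij_witness[of _ "\<lambda>j. t - j" "\<lambda>k. t - k"]) auto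

context arma
begin

lemma meas_cis_e: "(\<lambda>\<omega>. cis (w \<bullet> e j \<omega>)) \<in> borel_measurable M"
proof -
  have "(\<lambda>x. cis (w \<bullet> x)) \<in> borel_measurable borel"
    by (intro borel_measurable_continuous_onI continuous_intros)
  then show ?thesis using measurable_compose[OF e_meas[rule_format, of j]] by blast
qed

lemma e_char: "(\<integral>\<omega>. cis (w \<bullet> e t \<omega>) \<partial>M) = complex_of_real (exp (- (sigma\<^sup>2 * (w \<bullet> w)) / 2))"
proof -
  have g: "(\<integral>x. cis (w \<bullet> x) \<partial>distr M borel (e t)) =
      cis (w \<bullet> 0) * complex_of_real (exp (- (w \<bullet> ((sigma\<^sup>2 *\<^sub>R mat 1) *v w)) / 2))"
    using e_gauss unfolding gaussian_vec_def by blast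
  have "(\<integral>x. cis (w \<bullet> x) \<partial>distr M borel (e t)) = (\<integral>\<omega>. cis (w \<bullet> e t \<omega>) \<partial>M)"
    by (rule integral_distr) (use e_meas in \<open>auto intro!: borel_measurable_continuous_onI continuous_intros\<close>)
  moreover have "(sigma\<^sup>2 *\<^sub>R mat 1) *v w = sigma\<^sup>2 *\<^sub>R w"
    by (simp add: scaleR_matrix_vector_assoc[symmetric])
  ultimately show ?thesis using g by simp
qed

lemma char_lin:
  assumes J: "finite J"
  shows "(\<integral>\<omega>. cis (a + (\<Sum>j\<in>J. w j \<bullet> e j \<omega>)) \<partial>M) =
         cis a * complex_of_real (exp (- (sigma\<^sup>2 * (\<Sum>j\<in>J. w j \<bullet> w j)) / 2))"
proof -
  interpret P: prob_space M by (rule prob)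
  have mc: "(\<lambda>x. cis (w j \<bullet> x)) \<in> borel_measurable borel" for j
    by (intro borel_measurable_continuous_onI continuous_intros)
  have ind: "P.indep_vars (\<lambda>_. borel) (\<lambda>j \<omega>. cis (w j \<bullet> e j \<omega>)) J"
    using P.indep_vars_compose2[OF P.indep_vars_subset[OF e_indep subset_UNIV], where Y="\<lambda>j x. cis (w j \<bullet> x)" and N="\<lambda>_. borel"] mc
    by simp
  have intg: "integrable M (\<lambda>\<omega>. cis (w j \<bullet> e j \<omega>))" for j
    using meas_cis_e by (intro P.integrable_const_bound[where B=1]) auto
  have "(\<integral>\<omega>. cis (a + (\<Sum>j\<in>J. w j \<bullet> e j \<omega>)) \<partial>M) = (\<integral>\<omega>. cis a * (\<Prod>j\<in>J. cis (w j \<bullet> e j \<omega>)) \<partial>M)"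
    using J by (simp add: cis_sum)
  also have "\<dots> = cis a * (\<integral>\<omega>. (\<Prod>j\<in>J. cis (w j \<bullet> e j \<omega>)) \<partial>M)"
    by (rule integral_mult_right_zero)
  also have "(\<integral>\<omega>. (\<Prod>j\<in>J. cis (w j \<bullet> e j \<omega>)) \<partial>M) = (\<Prod>j\<in>J. \<integral>\<omega>. cis (w j \<bullet> e j \<omega>) \<partial>M)"
    using P.indep_vars_lebesgue_integral[OF J ind intg] .
  also have "\<dots> = (\<Prod>j\<in>J. complex_of_real (exp (- (sigma\<^sup>2 * (w j \<bullet> w j)) / 2)))"
    by (simp add: e_char)
  also have "\<dots> = complex_of_real (exp (- (sigma\<^sup>2 * (\<Sum>j\<in>J. w j \<bullet> w j)) / 2))"
  proof -
    have "exp (- (sigma\<^sup>2 * (\<Sum>j\<in>J. w j \<bullet> w j)) / 2) = exp (\<Sum>j\<in>J. - (sigma\<^sup>2 * (w j \<bullet> w j)) / 2)"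
      by (simp add: sum_distrib_left sum_divide_distrib sum_negf)
    also have "\<dots> = (\<Prod>j\<in>J. exp (- (sigma\<^sup>2 * (w j \<bullet> w j)) / 2))" using J by (rule exp_sum)
    finally show ?thesis by simp
  qed
  finally show ?thesis .
qed

definition aa :: "nat \<Rightarrow> real^'n" where
  "aa t = (\<Sum>i\<in>UNIV. ((\<Sum>k\<le>t. G k (mu i)) * (u i \<bullet> m)) *\<^sub>R u i)"
definition ww :: "real^'n \<Rightarrow> nat \<Rightarrow> real^'n" where
  "ww s k = (\<Sum>i\<in>UNIV. ((u i \<bullet> s) * G k (mu i)) *\<^sub>R u i)"
definition RR :: "nat \<Rightarrow> real \<Rightarrow> real" where
  "RR t x = (\<Sum>k\<le>t. (G k x)\<^sup>2)"

lemma ww_inner: "ww s k \<bullet> v = (\<Sum>i\<in>UNIV. (u i \<bullet> s) * G k (mu i) * (u i \<bullet> v))"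
  unfolding ww_def by (simp add: inner_sum_left)

lemma zz_dot: "s \<bullet> zz t \<omega> = s \<bullet> aa t + (\<Sum>j\<le>t. ww s (t - j) \<bullet> e j \<omega>)"
proof -
  have "s \<bullet> zz t \<omega> = (\<Sum>i\<in>UNIV. (u i \<bullet> s) * (u i \<bullet> zz t \<omega>))"
    by (rule onb_dot[OF orthonormal])
  also have "\<dots> = (\<Sum>i\<in>UNIV. (u i \<bullet> s) * (\<Sum>k\<le>t. G k (mu i) * (u i \<bullet> (m + e (t - k) \<omega>))))"
    by (simp only: zz_closed onb_coord[OF orthonormal])
  also have "\<dots> = (\<Sum>i\<in>UNIV. (u i \<bullet> s) * ((\<Sum>k\<le>t. G k (mu i)) * (u i \<bullet> m)))
        + (\<Sum>i\<in>UNIV. \<Sum>k\<le>t. (u i \<bullet> s) * G k (mu i) * (u i \<bullet> e (t - k) \<omega>))"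
    by (simp add: inner_add_right distrib_left sum.distrib sum_distrib_left sum_distrib_right mult_ac)
  also have "(\<Sum>i\<in>UNIV. (u i \<bullet> s) * ((\<Sum>k\<le>t. G k (mu i)) * (u i \<bullet> m))) = s \<bullet> aa t"
  proof -
    have "s \<bullet> aa t = (\<Sum>i\<in>UNIV. (u i \<bullet> s) * (u i \<bullet> aa t))" by (rule onb_dot[OF orthonormal])
    also have "\<dots> = (\<Sum>i\<in>UNIV. (u i \<bullet> s) * ((\<Sum>k\<le>t. G k (mu i)) * (u i \<bullet> m)))"
      by (simp only: aa_def onb_coord[OF orthonormal])
    finally show ?thesis by simp
  qed
  also have "(\<Sum>i\<in>UNIV. \<Sum>k\<le>t. (u i \<bullet> s) * G k (mu i) * (u i \<bullet> e (t - k) \<omega>)) = (\<Sum>k\<le>t. ww s k \<bullet> e (t - k) \<omega>)"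
    unfolding ww_inner by (rule sum.swap)
  also have "\<dots> = (\<Sum>j\<le>t. ww s (t - j) \<bullet> e j \<omega>)"
    by (subst sum_flip) simp
  finally show ?thesis .
qed

lemma ww_sq: "(\<Sum>j\<le>t. ww s (t - j) \<bullet> ww s (t - j)) = (\<Sum>i\<in>UNIV. (u i \<bullet> s)\<^sup>2 * RR t (mu i))"
proof -
  have "(\<Sum>j\<le>t. ww s (t - j) \<bullet> ww s (t - j)) = (\<Sum>k\<le>t. ww s k \<bullet> ww s k)"
    by (subst (2) sum_flip) simp
  also have "\<dots> = (\<Sum>k\<le>t. \<Sum>i\<in>UNIV. (u i \<bullet> s)\<^sup>2 * (G k (mu i))\<^sup>2)"
    unfolding ww_def onb_inner[OF orthonormal] by (simp add: power2_eq_square mult_ac)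
  also have "\<dots> = (\<Sum>i\<in>UNIV. (u i \<bullet> s)\<^sup>2 * RR t (mu i))"
    unfolding RR_def by (subst sum.swap) (simp add: sum_distrib_left)
  finally show ?thesis .
qed

lemma zz_char: "(\<integral>\<omega>. cis (s \<bullet> zz t \<omega>) \<partial>M) =
   cis (s \<bullet> aa t) * complex_of_real (exp (- (sigma\<^sup>2 * (\<Sum>i\<in>UNIV. (u i \<bullet> s)\<^sup>2 * RR t (mu i))) / 2))"
  unfolding zz_dot char_lin[OF finite_atMost] ww_sq ..

definition Vg :: "real^'n \<Rightarrow> ('n \<Rightarrow> real) \<Rightarrow> 'a \<Rightarrow> real^'n" where
  "Vg b Q \<omega> = b + (\<Sum>i\<in>UNIV. (sqrt (Q i) * (u i \<bullet> e 0 \<omega>)) *\<^sub>R u i)"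

lemma Vg_char:
  assumes Q: "\<And>i. Q i \<ge> 0"
  shows "(\<integral>\<omega>. cis (s \<bullet> Vg b Q \<omega>) \<partial>M) =
   cis (s \<bullet> b) * complex_of_real (exp (- (sigma\<^sup>2 * (\<Sum>i\<in>UNIV. (u i \<bullet> s)\<^sup>2 * Q i)) / 2))"
proof -
  define vv where "vv = (\<Sum>i\<in>UNIV. ((u i \<bullet> s) * sqrt (Q i)) *\<^sub>R u i)"
  have d: "s \<bullet> Vg b Q \<omega> = s \<bullet> b + (\<Sum>j\<in>{0}. vv \<bullet> e j \<omega>)" for \<omega>
    unfolding Vg_def vv_def by (simp add: inner_add_right inner_sum_right inner_sum_left inner_commute mult_ac)
  have "vv \<bullet> vv = (\<Sum>i\<in>UNIV. (u i \<bullet> s)\<^sup>2 * Q i)"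
    unfolding vv_def onb_inner[OF orthonormal]
  proof (rule sum.cong[OF refl])
    fix i
    show "u i \<bullet> s * sqrt (Q i) * (u i \<bullet> s * sqrt (Q i)) = (u i \<bullet> s)\<^sup>2 * Q i"
      using Q[of i] by (metis power2_eq_square power_mult_distrib real_sqrt_pow2)
  qed
  then show ?thesis unfolding d char_lin[OF finite.insertI[OF finite.emptyI]] by simp
qed

end

lemma quad_outer:
  fixes u :: "'n \<Rightarrow> real^'n"
  shows "s \<bullet> ((\<Sum>i\<in>UNIV. q i *\<^sub>R outer (u i)) *v s) = (\<Sum>i\<in>UNIV. q i * (u i \<bullet> s)\<^sup>2)"
proof -
  have "(\<Sum>i\<in>UNIV. q i *\<^sub>R outer (u i)) *v s = (\<Sum>i\<in>UNIV. (q i * (u i \<bullet> s)) *\<^sub>R u i)"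
  proof -
    have "((\<Sum>i\<in>UNIV. q i *\<^sub>R outer (u i)) *v s) $ a = (\<Sum>i\<in>UNIV. (q i * (u i \<bullet> s)) *\<^sub>R u i) $ a" for a
    proof -
      have "((\<Sum>i\<in>UNIV. q i *\<^sub>R outer (u i)) *v s) $ a = (\<Sum>b\<in>UNIV. \<Sum>i\<in>UNIV. q i * u i $ a * u i $ b * s $ b)"
        by (simp add: matrix_vector_mult_def sum_component outer_def sum_distrib_right sum_distrib_left mult_ac)
      also have "\<dots> = (\<Sum>i\<in>UNIV. \<Sum>b\<in>UNIV. q i * u i $ a * u i $ b * s $ b)" by (rule sum.swap)
      also have "\<dots> = (\<Sum>i\<in>UNIV. (q i * (u i \<bullet> s)) *\<^sub>R u i) $ a"
        by (simp add: sum_component inner_real_vec sum_distrib_left sum_distrib_right mult_ac)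
      finally show ?thesis .
    qed
    then show ?thesis by (simp add: vec_eq_iff)
  qed
  then show ?thesis by (simp add: inner_sum_right inner_commute power2_eq_square mult_ac)
qed

context arma
begin

lemma e_meas': "e t \<in> borel_measurable M" using e_meas by blast

lemma zz_fun: "zz t = (\<lambda>\<omega>. \<Sum>i\<in>UNIV. (\<Sum>k\<le>t. G k (mu i) * (u i \<bullet> (m + e (t - k) \<omega>))) *\<^sub>R u i)"
  using zz_closed by blast

lemma zz_meas: "zz t \<in> borel_measurable M"
  unfolding zz_fun using e_meas' by measurable

lemma Vg_meas: "Vg b Q \<in> borel_measurable M"
  unfolding Vg_def[abs_def] using e_meas' by measurable

lemma char_distr:
  assumes "X \<in> borel_measurable M"
  shows "(\<integral>x. cis (s \<bullet> x) \<partial>distr M borel X) = (\<integral>\<omega>. cis (s \<bullet> X \<omega>) \<partial>M)"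
  by (rule integral_distr[OF assms]) (intro borel_measurable_continuous_onI continuous_intros)

lemma law_eq: "distr M borel (zz t) = distr M borel (Vg (aa t) (\<lambda>i. RR t (mu i)))"
proof (rule char_unique)
  show "prob_space (distr M borel (zz t))" by (rule prob_space.prob_space_distr[OF prob zz_meas])
  show "prob_space (distr M borel (Vg (aa t) (\<lambda>i. RR t (mu i))))" by (rule prob_space.prob_space_distr[OF prob Vg_meas])
  show "sets (distr M borel (zz t)) = sets borel" by simp
  show "sets (distr M borel (Vg (aa t) (\<lambda>i. RR t (mu i)))) = sets borel" by simp
  fix s
  have R0: "\<And>i. RR t (mu i) \<ge> 0" unfolding RR_def by (auto intro: sum_nonneg)
  show "(\<integral>x. cis (s \<bullet> x) \<partial>distr M borel (zz t)) = (\<integral>x. cis (s \<bullet> x) \<partial>distr M borel (Vg (aa t) (\<lambda>i. RR t (mu i))))"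
    unfolding char_distr[OF zz_meas] char_distr[OF Vg_meas] zz_char Vg_char[OF R0] ..
qed

definition kap :: "real \<Rightarrow> complex" where
  "kap x = (\<Sum>l\<in>{1..K}. \<Sum>l'\<in>{1..K}. complex_of_real (sigma\<^sup>2) * phi l * cnj (phi l')
          / (1 - psi l * cnj (psi l') * complex_of_real (x\<^sup>2)))
        + complex_of_real (c * sigma\<^sup>2) * (complex_of_real c + 2 * (\<Sum>l\<in>{1..K}. phi l))"

lemma main:
  "\<exists>N. gaussian_vec (\<Sum>i\<in>UNIV. (Re (hh (mu i)) * (u i \<bullet> m)) *\<^sub>R u i)
                     (\<Sum>i\<in>UNIV. Re (kap (mu i)) *\<^sub>R outer (u i)) N \<and>
       converges_in_distribution (\<lambda>t. distr M borel (zz t)) N"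
proof -
  interpret P: prob_space M by (rule prob)
  define zbar where "zbar = (\<Sum>i\<in>UNIV. (Re (hh (mu i)) * (u i \<bullet> m)) *\<^sub>R u i)"
  define Q where "Q = (\<Sum>i\<in>UNIV. Re (kap (mu i)) *\<^sub>R outer (u i))"
  define Vinf where "Vinf = Vg zbar (\<lambda>i. Rinf (mu i))"
  define N where "N = distr M borel Vinf"
  have Vm: "Vinf \<in> borel_measurable M" unfolding Vinf_def by (rule Vg_meas)
  have gv: "gaussian_vec zbar Q N"
    unfolding gaussian_vec_def
  proof (intro conjI allI)
    show "prob_space N" unfolding N_def by (rule prob_space.prob_space_distr[OF prob Vm])
    show "sets N = sets borel" unfolding N_def by simp
    fix s
    have "s \<bullet> (Q *v s) = sigma\<^sup>2 * (\<Sum>i\<in>UNIV. (u i \<bullet> s)\<^sup>2 * Rinf (mu i))"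
      unfolding Q_def quad_outer kap_def S3 by (simp add: sum_distrib_left mult_ac)
    then show "(\<integral>x. cis (s \<bullet> x) \<partial>N) = cis (s \<bullet> zbar) * complex_of_real (exp (- (s \<bullet> (Q *v s)) / 2))"
      unfolding N_def char_distr[OF Vm] unfolding Vinf_def Vg_char[OF Rinf_nonneg] by simp
  qed
  have conv: "converges_in_distribution (\<lambda>t. distr M borel (zz t)) N"
    unfolding converges_in_distribution_def
  proof (intro allI impI)
    fix f :: "real^'n \<Rightarrow> real"
    assume fa: "continuous_on UNIV f \<and> bounded (range f)"
    then have fc: "continuous_on UNIV f" by blast
    obtain B where B: "\<And>x. norm (f x) \<le> B" using fa unfolding bounded_iff by blast
    have fm: "f \<in> borel_measurable borel" using fc by (rule borel_measurable_continuous_onI)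
    define Vt where "Vt t = Vg (aa t) (\<lambda>i. RR t (mu i))" for t
    have Vtm: "Vt t \<in> borel_measurable M" for t unfolding Vt_def by (rule Vg_meas)
    have eq: "(\<integral>x. f x \<partial>distr M borel (zz t)) = (\<integral>\<omega>. f (Vt t \<omega>) \<partial>M)" for t
      unfolding law_eq Vt_def[symmetric] by (rule integral_distr[OF Vtm fm])
    have eqN: "(\<integral>x. f x \<partial>N) = (\<integral>\<omega>. f (Vinf \<omega>) \<partial>M)"
      unfolding N_def by (rule integral_distr[OF Vm fm])
    have pt: "(\<lambda>t. Vt t \<omega>) \<longlonglongrightarrow> Vinf \<omega>" for \<omega>
    proof -
      have a: "(\<lambda>t. aa t) \<longlonglongrightarrow> zbar"
        unfolding aa_def zbar_def by (intro tendsto_intros S1)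
      have b: "(\<lambda>t. \<Sum>i\<in>UNIV. (sqrt (RR t (mu i)) * (u i \<bullet> e 0 \<omega>)) *\<^sub>R u i) \<longlonglongrightarrow>
               (\<Sum>i\<in>UNIV. (sqrt (Rinf (mu i)) * (u i \<bullet> e 0 \<omega>)) *\<^sub>R u i)"
        unfolding RR_def by (intro tendsto_intros S2)
      show ?thesis unfolding Vt_def Vinf_def Vg_def using tendsto_add[OF a b] by simp
    qed
    have "(\<lambda>t. \<integral>\<omega>. f (Vt t \<omega>) \<partial>M) \<longlonglongrightarrow> (\<integral>\<omega>. f (Vinf \<omega>) \<partial>M)"
    proof (rule integral_dominated_convergence[where w="\<lambda>_. B"])
      show "(\<lambda>\<omega>. f (Vinf \<omega>)) \<in> borel_measurable M" using measurable_compose[OF Vm fm] .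
      show "(\<lambda>\<omega>. f (Vt t \<omega>)) \<in> borel_measurable M" for t using measurable_compose[OF Vtm fm] .
      show "integrable M (\<lambda>_. B)" by simp
      show "AE \<omega> in M. (\<lambda>t. f (Vt t \<omega>)) \<longlonglongrightarrow> f (Vinf \<omega>)"
        by (rule AE_I2, rule continuous_on_tendsto_compose[OF fc pt]) auto
      show "AE \<omega> in M. norm (f (Vt t \<omega>)) \<le> B" for t using B by simp
    qed
    then show "(\<lambda>t. \<integral>x. f x \<partial>distr M borel (zz t)) \<longlonglongrightarrow> (\<integral>x. f x \<partial>N)"
      unfolding eq eqN .
  qed
  show ?thesis using gv conv unfolding zbar_def Q_def by blast
qed

end

theorem proposition1:
  fixes W :: "real^'n^'n"
    and u :: "'n \<Rightarrow> real^'n" and mu :: "'n \<Rightarrow> real"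
    and M :: "'a measure" and m :: "real^'n" and e :: "nat \<Rightarrow> 'a \<Rightarrow> real^'n"
    and sigma c :: real and K :: nat and psi phi :: "nat \<Rightarrow> complex"
  assumes W_sym: "\<forall>i j. W $ i $ j = W $ j $ i"
    and W_nonneg: "\<forall>i j. W $ i $ j \<ge> 0"
    and deg_pos: "\<forall>i. degree W i > 0"
    and eig: "\<forall>i. norm_laplacian W *v u i = mu i *\<^sub>R u i"
    and orthonormal: "\<forall>i j. u i \<bullet> u j = (if i = j then 1 else 0)"
    and prob: "prob_space M"
    and e_meas: "\<forall>t. e t \<in> borel_measurable M"
    and e_indep: "prob_space.indep_vars M (\<lambda>_. borel) e UNIV"
    and e_gauss: "\<forall>t. gaussian_vec 0 (sigma\<^sup>2 *\<^sub>R mat 1) (distr M borel (e t))"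
    and K_pos: "K \<ge> 1"
    and real_response: "\<forall>k. (\<Sum>l\<in>{1..K}. phi l * psi l ^ k) \<in> \<real>"
    and stable: "(MAX l\<in>{1..K}. cmod (psi l)) * spectral_radius (norm_laplacian W) < 1"
  shows "let L = norm_laplacian W;
             y = (\<lambda>\<omega> t. cvec (m + e t \<omega>));
             z = (\<lambda>t \<omega>. re_vec (arma_output K c psi phi (cmat L) (y \<omega>) t));
             h = (\<lambda>x::real. complex_of_real c + (\<Sum>l\<in>{1..K}. phi l / (1 - psi l * complex_of_real x)));
             \<eta> = complex_of_real (c * sigma\<^sup>2) * (complex_of_real c + 2 * (\<Sum>l\<in>{1..K}. phi l));
             \<kappa> = (\<lambda>x::real. (\<Sum>l\<in>{1..K}. \<Sum>l'\<in>{1..K}.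
                     complex_of_real (sigma\<^sup>2) * phi l * cnj (phi l')
                       / (1 - psi l * cnj (psi l') * complex_of_real (x\<^sup>2))) + \<eta>);
             zbar = (\<Sum>i\<in>UNIV. (Re (h (mu i)) * (u i \<bullet> m)) *\<^sub>R u i);
             Q = (\<Sum>i\<in>UNIV. Re (\<kappa> (mu i)) *\<^sub>R outer (u i))
         in \<exists>N. gaussian_vec zbar Q N \<and>
               converges_in_distribution (\<lambda>t. distr M borel (z t)) N"
proof -
  interpret arma W u mu M m e sigma c K psi phi
    unfolding arma_def
    using W_sym W_nonneg deg_pos eig orthonormal prob e_meas e_indep e_gauss K_pos real_response stable
    by blast
  show ?thesis unfolding Let_def using main unfolding hh_def kap_def zz_def[abs_def] by simp
qed


end
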